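(* Let $A\in\mathcal{S}_n$. Then $A\in\operatorname{int}(\mathcal{C}_n)$ if and only if $\operatorname{rank}(A)=n$ and there exist $b_1\in\mathbb{R}^n_{++}$ and $\lambda>0$ such that $A-\lambda b_1b_1^T\in\mathcal{C}_n$.
   Context: $\mathcal{S}_n$: real symmetric $n\times n$ matrices. $\mathcal{C}_n=\{BB^T: B\in\mathbb{R}^{n\times m}\text{ entrywise nonnegative},\ m\ge1\}$ is the completely positive cone, with interior taken in $\mathcal{S}_n$. $\mathbb{R}^n_{++}=\{x\in\mathbb{R}^n: x>0\text{ entrywise}\}$. *)

theory Defs
  imports "HOL-Analysis.Analysis"
begin

definition sym_mats :: "(real^'n^'n) set" where
  "sym_mats = {A. transpose A = A}"

definition outer :: "real^'n \<Rightarrow> real^'n \<Rightarrow> real^'n^'n" where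
  "outer x y = (\<chi> i j. x $ i * y $ j)"

text \<open>Completely positive cone: B B^T with B an entrywise nonnegative n x m matrix, m \<ge> 1;
  B B^T is written as the sum of the outer products of the columns b 0, ..., b (m-1) of B.\<close>
definition cp_cone :: "(real^'n^'n) set" where
  "cp_cone = {A. \<exists>m::nat. m \<ge> 1 \<and> (\<exists>b :: nat \<Rightarrow> real^'n.
      (\<forall>k<m. \<forall>i. b k $ i \<ge> 0) \<and> A = (\<Sum>k<m. outer (b k) (b k)))}"

end

theory Submission
  imports Defs
begin


lemma outer_nth[simp]: "outer x y $ i $ j = x $ i * y $ j"
  by (simp add: outer_def)

lemma cpI: "(m::nat) \<ge> 1 \<Longrightarrow> (\<forall>k<m. \<forall>i. b k $ i \<ge> 0) \<Longrightarrow> A = (\<Sum>k<m. outer (b k) (b k)) \<Longrightarrow> A \<in> cp_cone"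
  unfolding cp_cone_def by blast

lemma cpE: assumes "A \<in> cp_cone"
  obtains m::nat and b where "m \<ge> 1" "\<forall>k<m. \<forall>i. b k $ i \<ge> 0" "A = (\<Sum>k<m. outer (b k) (b k))"
  using assms unfolding cp_cone_def by blast

lemma cp_zero: "0 \<in> cp_cone"
proof -
  have "(0::real^'n^'n) = (\<Sum>k<1. outer ((\<lambda>_. 0) k) ((\<lambda>_. 0) k))" by (simp add: vec_eq_iff)
  then show ?thesis by (rule cpI[rotated 2]) auto
qed

lemma cp_outer: "(\<forall>i. x $ i \<ge> 0) \<Longrightarrow> outer x x \<in> cp_cone"
proof -
  assume a: "\<forall>i. x $ i \<ge> 0"
  show ?thesis by (rule cpI[of 1 "\<lambda>_. x"]) (use a in \<open>auto simp: lessThan_Suc\<close>)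
qed

lemma cp_add:
  assumes "A \<in> cp_cone" "B \<in> cp_cone" shows "A + B \<in> cp_cone"
proof -
  obtain m1 :: nat and b1 where 1: "m1 \<ge> 1" "\<forall>k<m1. \<forall>i. b1 k $ i \<ge> 0" "A = (\<Sum>k<m1. outer (b1 k) (b1 k))"
    using assms(1) by (rule cpE)
  obtain m2 :: nat and b2 where 2: "m2 \<ge> 1" "\<forall>k<m2. \<forall>i. b2 k $ i \<ge> 0" "B = (\<Sum>k<m2. outer (b2 k) (b2 k))"
    using assms(2) by (rule cpE)
  define b where "b k = (if k < m1 then b1 k else b2 (k - m1))" for k
  have "(\<Sum>k<m1+m2. outer (b k) (b k)) = (\<Sum>k<m1. outer (b k) (b k)) + (\<Sum>k<m2. outer (b (m1+k)) (b (m1+k)))"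
    by (induction m2) (auto simp: add.commute)
  also have "\<dots> = A + B" using 1 2 by (simp add: b_def)
  finally have "A + B = (\<Sum>k<m1+m2. outer (b k) (b k))" by simp
  moreover have "\<forall>k<m1+m2. \<forall>i. b k $ i \<ge> 0" using 1 2 by (auto simp: b_def)
  ultimately show ?thesis using 1 by (intro cpI[of "m1+m2" b]) auto
qed

lemma cp_scale:
  assumes "A \<in> cp_cone" "c \<ge> 0" shows "c *\<^sub>R A \<in> cp_cone"
proof -
  obtain m :: nat and b where 1: "m \<ge> 1" "\<forall>k<m. \<forall>i. b k $ i \<ge> 0" "A = (\<Sum>k<m. outer (b k) (b k))"
    using assms(1) by (rule cpE)
  have e: "\<And>x y. sqrt c * x * sqrt c * y = c * x * y"
    using assms(2) by (metis mult.commute mult.left_commute real_sqrt_mult_self abs_of_nonneg)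
  have "c *\<^sub>R A = (\<Sum>k<m. outer (sqrt c *\<^sub>R b k) (sqrt c *\<^sub>R b k))"
    using 1(3) by (simp add: vec_eq_iff outer_def sum_distrib_left mult.assoc[symmetric] e)
  then show ?thesis using 1 assms(2)
    by (intro cpI[of m "\<lambda>k. sqrt c *\<^sub>R b k"]) auto
qed

lemma cp_sum: "finite S \<Longrightarrow> (\<forall>s\<in>S. f s \<in> cp_cone) \<Longrightarrow> sum f S \<in> cp_cone"
  by (induction S rule: finite_induct) (auto intro: cp_zero cp_add)

lemma cp_absorb:
  assumes "\<forall>i. \<bar>v $ i\<bar> \<le> a $ i" shows "outer a a + outer v v \<in> cp_cone"
proof -
  have eq: "outer a a + outer v v = (1/2) *\<^sub>R outer (a+v) (a+v) + (1/2) *\<^sub>R outer (a-v) (a-v)"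
    by (simp add: vec_eq_iff algebra_simps)
  have nn: "0 \<le> a $ i + v $ i" "0 \<le> a $ i - v $ i" for i
  proof -
    have "v $ i \<le> a $ i" "- v $ i \<le> a $ i" using assms[rule_format, of i] by (auto simp: abs_le_iff)
    then show "0 \<le> a $ i + v $ i" "0 \<le> a $ i - v $ i" by linarith+
  qed
  have "outer (a+v) (a+v) \<in> cp_cone" "outer (a-v) (a-v) \<in> cp_cone"
    using nn by (auto intro!: cp_outer)
  then show ?thesis unfolding eq by (auto intro!: cp_add cp_scale)
qed

lemma inner_sum_mv: "finite S \<Longrightarrow> x \<bullet> (sum f S *v x) = (\<Sum>s\<in>S. x \<bullet> (f s *v x))"
  by (induction S rule: finite_induct) (auto simp: matrix_vector_mult_add_rdistrib inner_add_right)

lemma outer_mv: "outer x y *v z = (y \<bullet> z) *\<^sub>R x"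
  by (simp add: vec_eq_iff matrix_vector_mult_def inner_vec_def sum_distrib_left algebra_simps)

lemma cp_psd: "A \<in> cp_cone \<Longrightarrow> x \<bullet> (A *v x) \<ge> 0"
  by (erule cpE)  (auto simp: inner_sum_mv outer_mv inner_commute intro!: sum_nonneg)



lemma sym_iff: "A \<in> sym_mats \<longleftrightarrow> (\<forall>i j. A $ i $ j = A $ j $ i)"
  by (auto simp: sym_mats_def transpose_def vec_eq_iff)

lemma interior_iff:
  fixes A :: "real^'n^'n"
  assumes "A \<in> sym_mats"
  shows "A \<in> (top_of_set sym_mats) interior_of cp_cone \<longleftrightarrow>
    (\<exists>e>0. \<forall>A'\<in>sym_mats. dist A' A < e \<longrightarrow> A' \<in> cp_cone)"
proof
  assume "A \<in> (top_of_set sym_mats) interior_of cp_cone"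
  then obtain T where T: "openin (top_of_set sym_mats) T" "A \<in> T" "T \<subseteq> cp_cone"
    unfolding interior_of_def by blast
  then show "\<exists>e>0. \<forall>A'\<in>sym_mats. dist A' A < e \<longrightarrow> A' \<in> cp_cone"
    unfolding openin_euclidean_subtopology_iff by blast
next
  assume "\<exists>e>0. \<forall>A'\<in>sym_mats. dist A' A < e \<longrightarrow> A' \<in> cp_cone"
  then obtain e where e: "e > 0" "\<forall>A'\<in>sym_mats. dist A' A < e \<longrightarrow> A' \<in> cp_cone" by blast
  have "openin (top_of_set sym_mats) (sym_mats \<inter> ball A e)" by auto
  moreover have "A \<in> sym_mats \<inter> ball A e" using assms e by auto
  moreover have "sym_mats \<inter> ball A e \<subseteq> cp_cone" using e by (auto simp: dist_commute)
  ultimately show "A \<in> (top_of_set sym_mats) interior_of cp_cone"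
    unfolding interior_of_def by blast
qed

lemma scaleR_mv: "(t *\<^sub>R M) *v x = t *\<^sub>R (M *v (x::real^'n))"
  by (simp add: vec_eq_iff matrix_vector_mult_def sum_distrib_left mult.assoc)

lemma small_t: fixes e N :: real assumes "e > 0" "N \<ge> 0"
  shows "e / (2 * (N + 1)) > 0" "e / (2 * (N + 1)) * N < e"
proof -
  show "e / (2 * (N + 1)) > 0" using assms by simp
  have "e / (2 * (N + 1)) * N = e * (N / (2 * (N + 1)))" by simp
  also have "N / (2 * (N + 1)) < 1" using assms by (simp add: field_simps)
  then have "e * (N / (2 * (N + 1))) < e * 1" using assms by (intro mult_strict_left_mono) auto
  finally show "e / (2 * (N + 1)) * N < e" by simp
qed

lemma forward:
  fixes A :: "real^'n^'n"
  assumes S: "A \<in> sym_mats" and e: "e > 0" "\<forall>A'\<in>sym_mats. dist A' A < e \<longrightarrow> A' \<in> cp_cone"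
  shows "rank A = CARD('n) \<and>
     (\<exists>b1 :: real^'n. \<exists>lam::real. (\<forall>i. b1 $ i > 0) \<and> lam > 0 \<and>
        A - lam *\<^sub>R outer b1 b1 \<in> cp_cone)"
proof
  have key: "A - t *\<^sub>R outer x x \<in> cp_cone" if "0 \<le> t" "t * norm (outer x x) < e" for t x
  proof -
    have "A - t *\<^sub>R outer x x \<in> sym_mats" using S by (auto simp: sym_iff)
    moreover have "dist (A - t *\<^sub>R outer x x) A < e" using that by (simp add: dist_norm)
    ultimately show ?thesis using e by blast
  qed
  show "rank A = CARD('n)"
  proof (rule ccontr)
    assume "rank A \<noteq> CARD('n)"
    then have "rank A < CARD('n)" using rank_bound[of A] by simp
    then have "\<not> inj ((*v) A)" by (simp add: less_rank_noninjective)
    then obtain x where x: "A *v x = 0" "x \<noteq> 0"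
      by (metis matrix_left_invertible_injective matrix_left_invertible_ker)
    define t where "t = e / (2 * (norm (outer x x) + 1))"
    have t: "t > 0" "t * norm (outer x x) < e" using e(1) unfolding t_def
      using small_t[OF e(1) norm_ge_zero] by auto
    have ge: "x \<bullet> ((A - t *\<^sub>R outer x x) *v x) \<ge> 0" using key[of t x] t by (auto intro: cp_psd)
    have "(A - t *\<^sub>R outer x x) *v x = A *v x - t *\<^sub>R (outer x x *v x)"
      by (simp add: matrix_vector_mult_diff_rdistrib scaleR_mv)
    also have "\<dots> = - (t * (x \<bullet> x)) *\<^sub>R x" using x by (simp add: outer_mv)
    finally have "x \<bullet> ((A - t *\<^sub>R outer x x) *v x) = - (t * (x \<bullet> x)) * (x \<bullet> x)"
      by simp
    moreover have "x \<bullet> x > 0" using x by simp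
    ultimately have "t * (x \<bullet> x) * (x \<bullet> x) > 0" "x \<bullet> ((A - t *\<^sub>R outer x x) *v x) = - (t * (x \<bullet> x) * (x \<bullet> x))"
      using t by (auto intro!: mult_pos_pos)
    then show False using ge by linarith
  qed
next
  define b1 :: "real^'n" where "b1 = (\<chi> i. 1)"
  define t where "t = e / (2 * (norm (outer b1 b1) + 1))"
  have t: "t > 0" "t * norm (outer b1 b1) < e" using e(1) unfolding t_def
    using small_t[OF e(1) norm_ge_zero] by auto
  have "A - t *\<^sub>R outer b1 b1 \<in> sym_mats" using S by (auto simp: sym_iff)
  moreover have "dist (A - t *\<^sub>R outer b1 b1) A < e" using t by (simp add: dist_norm)
  ultimately have "A - t *\<^sub>R outer b1 b1 \<in> cp_cone" using e by blast
  then show "\<exists>b1 :: real^'n. \<exists>lam::real. (\<forall>i. b1 $ i > 0) \<and> lam > 0 \<and>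
        A - lam *\<^sub>R outer b1 b1 \<in> cp_cone" using t by (intro exI[of _ b1] exI[of _ t]) (auto simp: b1_def)
qed



lemma KI:
  fixes A Ainv E :: "real^'n^'n" and w :: "nat \<Rightarrow> real^'n"
  assumes hA: "A = (\<Sum>k<p. outer (w k) (w k))" and inv: "Ainv ** A = mat 1"
  shows "E $ i $ j = (\<Sum>k<p. \<Sum>l<p. ((Ainv *v w k) \<bullet> (E *v (Ainv *v w l))) * w k $ i * w l $ j)"
proof -
  define y where "y k = Ainv *v w k" for k
  have Ae: "A $ c $ i = (\<Sum>k<p. w k $ c * w k $ i)" for c i using hA by simp
  have F1: "(\<Sum>k<p. w k $ i * y k $ a) = (if a = i then 1 else 0)" for i a
  proof -
    have "(\<Sum>k<p. w k $ i * y k $ a) = (\<Sum>k<p. \<Sum>c\<in>UNIV. Ainv $ a $ c * (w k $ c * w k $ i))"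
      by (simp add: y_def matrix_vector_mult_def sum_distrib_left algebra_simps)
    also have "\<dots> = (\<Sum>c\<in>UNIV. Ainv $ a $ c * A $ c $ i)"
      by (subst sum.swap) (simp add: Ae sum_distrib_left)
    also have "\<dots> = (Ainv ** A) $ a $ i" by (simp add: matrix_matrix_mult_def)
    also have "\<dots> = (if a = i then 1 else 0)" using inv by (simp add: mat_def)
    finally show ?thesis .
  qed
  have S1: "(\<Sum>l<p. (y k \<bullet> (E *v y l)) * w l $ j) = (\<Sum>a\<in>UNIV. y k $ a * E $ a $ j)" for k
  proof -
    have "(\<Sum>l<p. (y k \<bullet> (E *v y l)) * w l $ j)
        = (\<Sum>l<p. \<Sum>a\<in>UNIV. \<Sum>b\<in>UNIV. y k $ a * E $ a $ b * (w l $ j * y l $ b))"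
      by (simp add: inner_vec_def matrix_vector_mult_def sum_distrib_left sum_distrib_right algebra_simps)
    also have "\<dots> = (\<Sum>a\<in>UNIV. \<Sum>b\<in>UNIV. y k $ a * E $ a $ b * (\<Sum>l<p. w l $ j * y l $ b))"
    proof -
      have "(\<Sum>l<p. \<Sum>a\<in>UNIV. \<Sum>b\<in>UNIV. y k $ a * E $ a $ b * (w l $ j * y l $ b))
         = (\<Sum>a\<in>UNIV. \<Sum>l<p. \<Sum>b\<in>UNIV. y k $ a * E $ a $ b * (w l $ j * y l $ b))"
        by (rule sum.swap)
      also have "\<dots> = (\<Sum>a\<in>UNIV. \<Sum>b\<in>UNIV. \<Sum>l<p. y k $ a * E $ a $ b * (w l $ j * y l $ b))"
        by (rule sum.cong[OF refl], rule sum.swap)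
      finally show ?thesis by (simp add: sum_distrib_left)
    qed
    also have "\<dots> = (\<Sum>a\<in>UNIV. y k $ a * E $ a $ j)"
      by (simp add: F1 if_distrib cong: if_cong)
    finally show ?thesis .
  qed
  have "(\<Sum>k<p. \<Sum>l<p. (y k \<bullet> (E *v y l)) * w k $ i * w l $ j)
      = (\<Sum>k<p. w k $ i * (\<Sum>l<p. (y k \<bullet> (E *v y l)) * w l $ j))"
    by (simp add: sum_distrib_left algebra_simps)
  also have "\<dots> = (\<Sum>k<p. w k $ i * (\<Sum>a\<in>UNIV. y k $ a * E $ a $ j))"
    by (simp only: S1)
  also have "\<dots> = (\<Sum>k<p. \<Sum>a\<in>UNIV. E $ a $ j * (w k $ i * y k $ a))"
    by (simp add: sum_distrib_left algebra_simps)
  also have "\<dots> = (\<Sum>a\<in>UNIV. E $ a $ j * (\<Sum>k<p. w k $ i * y k $ a))"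
    by (subst sum.swap) (simp add: sum_distrib_left)
  also have "\<dots> = E $ i $ j" by (simp add: F1 if_distrib cong: if_cong)
  finally show ?thesis by (simp add: y_def)
qed



lemma pair_id: "h/2 * (x1 * y2 + x2 * y1) =
   \<bar>h\<bar>/2 * ((x1 + sgn h * y1) * (x2 + sgn h * y2)) - \<bar>h\<bar>/2 * (x1 * x2) - \<bar>h\<bar>/2 * (y1 * y2)"
  for h x1 x2 y1 y2 :: real
proof (cases "h > 0")
  case True then show ?thesis by (simp add: algebra_simps)
next
  case False
  show ?thesis
  proof (cases "h = 0")
    case True then show ?thesis by simp
  next
    case False
    with \<open>\<not> h > 0\<close> have "h < 0" by simp
    then show ?thesis by (simp add: algebra_simps)
  qed
qed

lemma decomp:
  fixes E :: "real^'n^'n" and w :: "nat \<Rightarrow> real^'n" and H :: "nat \<Rightarrow> nat \<Rightarrow> real"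
  assumes sym: "\<forall>i j. E $ i $ j = E $ j $ i"
    and KIe: "\<forall>i j. E $ i $ j = (\<Sum>k<p. \<Sum>l<p. H k l * w k $ i * w l $ j)"
  shows "E = (\<Sum>k<p. \<Sum>l<p. (\<bar>H k l\<bar>/2) *\<^sub>R outer (w k + sgn (H k l) *\<^sub>R w l) (w k + sgn (H k l) *\<^sub>R w l))
     - (\<Sum>k<p. (\<Sum>l<p. (\<bar>H k l\<bar> + \<bar>H l k\<bar>)/2) *\<^sub>R outer (w k) (w k))"
proof -
  have "E $ i $ j = (\<Sum>k<p. \<Sum>l<p. (\<bar>H k l\<bar>/2) * ((w k $ i + sgn (H k l) * w l $ i) * (w k $ j + sgn (H k l) * w l $ j)))
     - (\<Sum>k<p. (\<Sum>l<p. (\<bar>H k l\<bar> + \<bar>H l k\<bar>)/2) * (w k $ i * w k $ j))" for i j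
  proof -
    have e1: "E $ i $ j = (E $ i $ j + E $ j $ i) / 2" using sym by simp
    have e2: "(E $ i $ j + E $ j $ i) / 2 = (\<Sum>k<p. \<Sum>l<p. H k l / 2 * (w k $ i * w l $ j + w k $ j * w l $ i))"
    proof -
      have pt: "H k l / 2 * (w k $ i * w l $ j + w k $ j * w l $ i) = (H k l * w k $ i * w l $ j)/2 + (H k l * w k $ j * w l $ i)/2" for k l
        by (simp add: field_simps)
      show ?thesis unfolding pt sum.distrib sum_divide_distrib[symmetric] add_divide_distrib
        using KIe by simp
    qed
    have e3: "(\<Sum>k<p. \<Sum>l<p. H k l / 2 * (w k $ i * w l $ j + w k $ j * w l $ i)) =
       (\<Sum>k<p. \<Sum>l<p. (\<bar>H k l\<bar>/2) * ((w k $ i + sgn (H k l) * w l $ i) * (w k $ j + sgn (H k l) * w l $ j)))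
       - (\<Sum>k<p. \<Sum>l<p. \<bar>H k l\<bar>/2 * (w k $ i * w k $ j)) - (\<Sum>k<p. \<Sum>l<p. \<bar>H k l\<bar>/2 * (w l $ i * w l $ j))"
      unfolding pair_id by (simp only: sum_subtractf)
    have e4: "(\<Sum>k<p. \<Sum>l<p. \<bar>H k l\<bar>/2 * (w l $ i * w l $ j)) = (\<Sum>k<p. \<Sum>l<p. \<bar>H l k\<bar>/2 * (w k $ i * w k $ j))"
      by (rule sum.swap)
    have e5: "(\<Sum>k<p. (\<Sum>l<p. (\<bar>H k l\<bar> + \<bar>H l k\<bar>)/2) * (w k $ i * w k $ j)) =
       (\<Sum>k<p. \<Sum>l<p. \<bar>H k l\<bar>/2 * (w k $ i * w k $ j)) + (\<Sum>k<p. \<Sum>l<p. \<bar>H l k\<bar>/2 * (w k $ i * w k $ j))"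
      unfolding sum_distrib_right[symmetric] add_divide_distrib distrib_right sum.distrib ..
    have "E $ i $ j = (\<Sum>k<p. \<Sum>l<p. (\<bar>H k l\<bar>/2) * ((w k $ i + sgn (H k l) * w l $ i) * (w k $ j + sgn (H k l) * w l $ j)))
       - (\<Sum>k<p. \<Sum>l<p. \<bar>H k l\<bar>/2 * (w k $ i * w k $ j)) - (\<Sum>k<p. \<Sum>l<p. \<bar>H l k\<bar>/2 * (w k $ i * w k $ j))"
      using trans[OF e1 trans[OF e2 e3]] unfolding e4 .
    then show ?thesis unfolding e5 by simp
  qed
  then show ?thesis by (simp add: vec_eq_iff)
qed



lemma H_bound:
  fixes E :: "real^'n^'n"
  assumes "\<forall>a b. \<bar>E $ a $ b\<bar> \<le> d"
  shows "\<bar>y \<bullet> (E *v z)\<bar> \<le> d * (\<Sum>a\<in>UNIV. \<bar>y $ a\<bar>) * (\<Sum>b\<in>UNIV. \<bar>z $ b\<bar>)"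
proof -
  have "\<bar>y \<bullet> (E *v z)\<bar> = \<bar>\<Sum>a\<in>UNIV. \<Sum>b\<in>UNIV. y $ a * E $ a $ b * z $ b\<bar>"
    by (simp add: inner_vec_def matrix_vector_mult_def sum_distrib_left mult.assoc)
  also have "\<dots> \<le> (\<Sum>a\<in>UNIV. \<Sum>b\<in>UNIV. \<bar>y $ a * E $ a $ b * z $ b\<bar>)"
    by (rule order_trans[OF sum_abs]) (intro sum_mono sum_abs)
  also have "\<dots> \<le> (\<Sum>a\<in>UNIV. \<Sum>b\<in>UNIV. \<bar>y $ a\<bar> * d * \<bar>z $ b\<bar>)"
    using assms by (intro sum_mono) (auto simp: abs_mult intro!: mult_right_mono mult_left_mono)
  also have "\<dots> = d * (\<Sum>a\<in>UNIV. \<bar>y $ a\<bar>) * (\<Sum>b\<in>UNIV. \<bar>z $ b\<bar>)"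
    by (simp add: sum_distrib_left sum_distrib_right algebra_simps)
  finally show ?thesis .
qed



lemma rearr: "(x::'a::ab_group_add) = (y1 + y2) + s + q \<Longrightarrow> x = y1 + s + (y2 + q)"
  by (simp add: algebra_simps)

lemma backward:
  fixes A :: "real^'n^'n"
  assumes rk: "rank A = CARD('n)" and bpos: "\<forall>i. b1 $ i > 0" and lam: "lam > 0"
    and cp: "A - lam *\<^sub>R outer b1 b1 \<in> cp_cone"
  shows "\<exists>\<delta>>0. \<forall>A'\<in>sym_mats. dist A' A < \<delta> \<longrightarrow> A' \<in> cp_cone"
proof -
  obtain m :: nat and c where c: "m \<ge> 1" "\<forall>k<m. \<forall>i. c k $ i \<ge> 0"
      "A - lam *\<^sub>R outer b1 b1 = (\<Sum>k<m. outer (c k) (c k))"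
    using cp by (rule cpE)
  define p where "p = Suc m"
  define w where "w k = (if k = 0 then sqrt lam *\<^sub>R b1 else c (k - 1))" for k
  have wnn: "w k $ i \<ge> 0" if "k < p" for k i
    using c(2) bpos lam that by (auto simp: w_def p_def less_imp_le)
  have w0: "outer (w 0) (w 0) = lam *\<^sub>R outer b1 b1"
    using lam by (simp add: w_def vec_eq_iff algebra_simps)
  have hA: "A = (\<Sum>k<p. outer (w k) (w k))"
    unfolding p_def sum.lessThan_Suc_shift w0 using c(3) by (simp add: w_def algebra_simps)
  obtain Ainv where inv: "Ainv ** A = mat 1"
    using rk full_rank_injective matrix_left_invertible_injective by metis
  define y where "y k = Ainv *v w k" for k
  define H where "H E k l = y k \<bullet> (E *v y l)" for E :: "real^'n^'n" and k l
  define \<beta> where "\<beta> = Min (range (\<lambda>i. b1 $ i))"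
  have \<beta>pos: "\<beta> > 0" unfolding \<beta>_def using bpos by (subst Min_gr_iff) auto
  have \<beta>le: "\<beta> \<le> b1 $ i" for i unfolding \<beta>_def by (rule Min_le) auto
  define W where "W = (\<Sum>k<p. \<Sum>i\<in>UNIV. \<bar>w k $ i\<bar>)"
  have Wle: "\<bar>w k $ i\<bar> \<le> W" if "k < p" for k i
  proof -
    have "\<bar>w k $ i\<bar> \<le> (\<Sum>i\<in>UNIV. \<bar>w k $ i\<bar>)" by (rule member_le_sum) auto
    also have "\<dots> \<le> W" unfolding W_def using that by (intro member_le_sum) (auto intro: sum_nonneg)
    finally show ?thesis .
  qed
  define Y where "Y = (\<Sum>k<p. \<Sum>i\<in>UNIV. \<bar>y k $ i\<bar>)"
  have Yle: "(\<Sum>i\<in>UNIV. \<bar>y k $ i\<bar>) \<le> Y" if "k < p" for k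
    unfolding Y_def using that by (intro member_le_sum) (auto intro: sum_nonneg)
  have Y0: "Y \<ge> 0" unfolding Y_def by (intro sum_nonneg) auto
  define \<eta> where "\<eta> = min (lam * \<beta>\<^sup>2 / ((real p)\<^sup>2 * (4 * W\<^sup>2 + 1))) (1 / (2 * real p))"
  have dpos: "(real p)\<^sup>2 * (4 * W\<^sup>2 + 1) > 0"
    by (intro mult_pos_pos) (auto simp: p_def intro: add_nonneg_pos)
  have \<eta>pos: "\<eta> > 0" unfolding \<eta>_def using lam \<beta>pos dpos
    by (auto intro!: divide_pos_pos mult_pos_pos simp: p_def)
  define \<delta> where "\<delta> = \<eta> / (Y\<^sup>2 + 1)"
  have \<delta>pos: "\<delta> > 0" unfolding \<delta>_def using \<eta>pos by (intro divide_pos_pos) (auto intro: add_nonneg_pos)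
  have main: "A' \<in> cp_cone" if A'S: "A' \<in> sym_mats" and A'd: "dist A' A < \<delta>" for A'
  proof -
    define E where "E = A' - A"
    have Eab: "\<bar>E $ a $ b\<bar> \<le> \<delta>" for a b
    proof -
      have "\<bar>E $ a $ b\<bar> \<le> norm (E $ a)" by (rule component_le_norm_cart)
      also have "\<dots> \<le> norm E" by (rule Finite_Cartesian_Product.norm_nth_le)
      also have "\<dots> < \<delta>" using A'd by (simp add: E_def dist_norm)
      finally show ?thesis by simp
    qed
    have Hb: "\<bar>H E k l\<bar> \<le> \<eta>" if "k < p" "l < p" for k l
    proof -
      have "\<bar>H E k l\<bar> \<le> \<delta> * (\<Sum>a\<in>UNIV. \<bar>y k $ a\<bar>) * (\<Sum>b\<in>UNIV. \<bar>y l $ b\<bar>)"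
        unfolding H_def using Eab by (intro H_bound) auto
      also have "\<dots> \<le> \<delta> * Y * Y"
        using Yle[OF that(1)] Yle[OF that(2)] \<delta>pos Y0
        by (intro mult_mono) (auto intro: sum_nonneg)
      also have "\<dots> \<le> \<eta>"
      proof -
        have "\<delta> * Y * Y = \<eta> * (Y\<^sup>2 / (Y\<^sup>2 + 1))" unfolding \<delta>_def by (simp add: power2_eq_square)
        moreover have "Y\<^sup>2 / (Y\<^sup>2 + 1) \<le> 1" by (simp add: add_nonneg_pos)
        ultimately show ?thesis using \<eta>pos by (metis less_imp_le mult_left_le)
      qed
      finally show ?thesis .
    qed
    have Asym: "A $ i $ j = A $ j $ i" for i j using hA by (simp add: mult.commute)
    have Esym: "\<forall>i j. E $ i $ j = E $ j $ i" using A'S Asym by (auto simp: sym_iff E_def)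
    have KIe: "\<forall>i j. E $ i $ j = (\<Sum>k<p. \<Sum>l<p. H E k l * w k $ i * w l $ j)"
      unfolding H_def y_def using KI[OF hA inv] by blast
    define r where "r k = (\<Sum>l<p. (\<bar>H E k l\<bar> + \<bar>H E l k\<bar>)/2)" for k
    define u where "u k l = w k + sgn (H E k l) *\<^sub>R w l" for k l
    have dec: "E = (\<Sum>k<p. \<Sum>l<p. (\<bar>H E k l\<bar>/2) *\<^sub>R outer (u k l) (u k l))
        - (\<Sum>k<p. r k *\<^sub>R outer (w k) (w k))"
      unfolding u_def r_def by (rule decomp[OF Esym KIe])
    have rle: "r k \<le> 1/2" if "k < p" for k
    proof -
      have "r k \<le> (\<Sum>l<p. \<eta>)" unfolding r_def
      proof (intro sum_mono)
        fix l assume "l \<in> {..<p}"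
        then have "\<bar>H E k l\<bar> \<le> \<eta>" "\<bar>H E l k\<bar> \<le> \<eta>" using Hb that by auto
        then show "(\<bar>H E k l\<bar> + \<bar>H E l k\<bar>) / 2 \<le> \<eta>" by simp
      qed
      also have "\<dots> = real p * \<eta>" by simp
      also have "\<dots> \<le> real p * (1 / (2 * real p))" unfolding \<eta>_def
        by (intro mult_left_mono) auto
      also have "\<dots> = 1/2" by (simp add: p_def)
      finally show ?thesis .
    qed
    define \<mu> where "\<mu> = lam / (2 * (real p)\<^sup>2)"
    have \<mu>pos: "\<mu> > 0" unfolding \<mu>_def using lam by (simp add: p_def)
    define a where "a = sqrt \<mu> *\<^sub>R b1"
    define v where "v k l = sqrt (\<bar>H E k l\<bar>/2) *\<^sub>R u k l" for k l
    have sq: "sqrt t * x * (sqrt t * y) = t * x * y" if "t \<ge> 0" for t x y :: real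
      using that by (metis mult.commute mult.left_commute real_sqrt_mult_self abs_of_nonneg)
    have vv: "outer (v k l) (v k l) = (\<bar>H E k l\<bar>/2) *\<^sub>R outer (u k l) (u k l)" for k l
      by (simp add: v_def vec_eq_iff mult.assoc[symmetric])
    have aa: "outer a a = \<mu> *\<^sub>R outer b1 b1"
      using \<mu>pos by (simp add: a_def vec_eq_iff mult.assoc[symmetric])
    have sumaa: "(\<Sum>k<p. \<Sum>l<p. outer a a) = (lam/2) *\<^sub>R outer b1 b1"
    proof -
      have "(\<Sum>k<p. \<Sum>l<p. outer a a) = (real p * real p * \<mu>) *\<^sub>R outer b1 b1"
        by (simp only: sum_constant_scaleR card_lessThan scaleR_scaleR aa mult.assoc)
      also have "real p * real p * \<mu> = lam / 2" by (simp add: \<mu>_def power2_eq_square p_def)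
      finally show ?thesis .
    qed
    have s1: "(\<Sum>k<p. (1 - r k) *\<^sub>R outer (w k) (w k)) =
        (1 - r 0) *\<^sub>R (lam *\<^sub>R outer b1 b1) + (\<Sum>k<m. (1 - r (Suc k)) *\<^sub>R outer (c k) (c k))"
      unfolding p_def sum.lessThan_Suc_shift w0 by (simp add: w_def)
    have s2: "(\<Sum>k<p. (1 - r k) *\<^sub>R outer (w k) (w k)) = A - (\<Sum>k<p. r k *\<^sub>R outer (w k) (w k))"
      by (simp add: hA scaleR_diff_left sum_subtractf)
    have s3: "(\<Sum>k<p. \<Sum>l<p. outer a a + outer (v k l) (v k l)) =
        (lam/2) *\<^sub>R outer b1 b1 + (\<Sum>k<p. \<Sum>l<p. (\<bar>H E k l\<bar>/2) *\<^sub>R outer (u k l) (u k l))"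
      by (simp only: sum.distrib vv sumaa)
    have eq: "A' = (1/2 - r 0) *\<^sub>R (lam *\<^sub>R outer b1 b1)
        + (\<Sum>k<m. (1 - r (Suc k)) *\<^sub>R outer (c k) (c k))
        + (\<Sum>k<p. \<Sum>l<p. outer a a + outer (v k l) (v k l))"
    proof -
      define Q where "Q = (\<Sum>k<p. \<Sum>l<p. (\<bar>H E k l\<bar>/2) *\<^sub>R outer (u k l) (u k l))"
      define R where "R = (\<Sum>k<p. r k *\<^sub>R outer (w k) (w k))"
      define Sc where "Sc = (\<Sum>k<m. (1 - r (Suc k)) *\<^sub>R outer (c k) (c k))"
      have dec': "E = Q - R" unfolding Q_def R_def by (rule dec)
      have s2': "(\<Sum>k<p. (1 - r k) *\<^sub>R outer (w k) (w k)) = A - R" unfolding R_def by (rule s2)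
      have s1': "A - R = (1 - r 0) *\<^sub>R (lam *\<^sub>R outer b1 b1) + Sc" unfolding Sc_def s2'[symmetric] by (rule s1)
      have s3': "(\<Sum>k<p. \<Sum>l<p. outer a a + outer (v k l) (v k l)) = (lam/2) *\<^sub>R outer b1 b1 + Q"
        unfolding Q_def by (rule s3)
      have h: "(1 - r 0) *\<^sub>R (lam *\<^sub>R outer b1 b1) = (1/2 - r 0) *\<^sub>R (lam *\<^sub>R outer b1 b1) + (lam/2) *\<^sub>R outer b1 b1"
        by (simp add: scaleR_add_left[symmetric], rule disjI1, simp add: algebra_simps)
      have "A' = A + E" by (simp add: E_def)
      also have "\<dots> = (A - R) + Q" unfolding dec' by simp
      also have "\<dots> = ((1/2 - r 0) *\<^sub>R (lam *\<^sub>R outer b1 b1) + (lam/2) *\<^sub>R outer b1 b1) + Sc + Q"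
        unfolding s1' h ..
      finally have "A' = ((1/2 - r 0) *\<^sub>R (lam *\<^sub>R outer b1 b1) + (lam/2) *\<^sub>R outer b1 b1) + Sc + Q" .
      then show ?thesis unfolding s3' Sc_def[symmetric] by (rule rearr)
    qed
    have r0: "r 0 \<le> 1/2" using rle by (simp add: p_def)
    have P1: "(1/2 - r 0) *\<^sub>R (lam *\<^sub>R outer b1 b1) \<in> cp_cone"
      using r0 lam bpos by (intro cp_scale cp_outer) (auto simp: less_imp_le)
    have P2: "(\<Sum>k<m. (1 - r (Suc k)) *\<^sub>R outer (c k) (c k)) \<in> cp_cone"
    proof (intro cp_sum ballI)
      fix k assume "k \<in> {..<m}"
      then have "Suc k < p" "k < m" by (auto simp: p_def)
      then show "(1 - r (Suc k)) *\<^sub>R outer (c k) (c k) \<in> cp_cone"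
        using rle[of "Suc k"] c(2) by (intro cp_scale cp_outer) auto
    qed simp
    have absorb: "\<bar>v k l $ i\<bar> \<le> a $ i" if "k < p" "l < p" for k l i
    proof -
      have "\<bar>u k l $ i\<bar> \<le> \<bar>w k $ i\<bar> + \<bar>w l $ i\<bar>"
      proof -
        have "\<bar>sgn (H E k l) * w l $ i\<bar> \<le> \<bar>w l $ i\<bar>" by (auto simp: abs_mult sgn_if)
        then show ?thesis unfolding u_def using abs_triangle_ineq[of "w k $ i" "sgn (H E k l) * w l $ i"]
          by simp
      qed
      also have "\<dots> \<le> 2 * W" using Wle[OF that(1), of i] Wle[OF that(2), of i] by simp
      finally have "\<bar>u k l $ i\<bar> \<le> 2 * W" .
      then have "\<bar>u k l $ i\<bar>\<^sup>2 \<le> (2 * W)\<^sup>2" by (intro power_mono) auto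
      then have hu: "(u k l $ i)\<^sup>2 \<le> 4 * W\<^sup>2" by (simp add: power_mult_distrib)
      have hH: "\<bar>H E k l\<bar> \<le> lam * \<beta>\<^sup>2 / ((real p)\<^sup>2 * (4 * W\<^sup>2 + 1))"
        using Hb[OF that] unfolding \<eta>_def by simp
      have pp: "(real p)\<^sup>2 > 0" by (simp add: p_def)
      have hH2: "\<bar>H E k l\<bar> * (4 * W\<^sup>2) * (real p)\<^sup>2 \<le> lam * \<beta>\<^sup>2"
      proof -
        have "\<bar>H E k l\<bar> * ((real p)\<^sup>2 * (4 * W\<^sup>2 + 1)) \<le> lam * \<beta>\<^sup>2"
          using hH pos_le_divide_eq[OF dpos] by blast
        moreover have "\<bar>H E k l\<bar> * (4 * W\<^sup>2) * (real p)\<^sup>2 \<le> \<bar>H E k l\<bar> * ((real p)\<^sup>2 * (4 * W\<^sup>2 + 1))"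
          by (simp add: algebra_simps mult_nonneg_nonneg)
        ultimately show ?thesis by linarith
      qed
      have key: "\<bar>H E k l\<bar>/2 * (u k l $ i)\<^sup>2 \<le> \<mu> * (b1 $ i)\<^sup>2"
      proof -
        have "\<bar>H E k l\<bar>/2 * (u k l $ i)\<^sup>2 \<le> \<bar>H E k l\<bar>/2 * (4 * W\<^sup>2)"
          using hu by (intro mult_left_mono) auto
        also have "\<dots> \<le> \<mu> * \<beta>\<^sup>2" unfolding \<mu>_def using hH2 pp
          by (simp add: field_simps)
        also have "\<dots> \<le> \<mu> * (b1 $ i)\<^sup>2" using \<beta>le[of i] \<beta>pos \<mu>pos
          by (intro mult_left_mono power_mono) auto
        finally show ?thesis .
      qed
      have "\<bar>v k l $ i\<bar> = sqrt (\<bar>H E k l\<bar>/2) * \<bar>u k l $ i\<bar>"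
        by (simp add: v_def abs_mult)
      also have "\<dots> = sqrt (\<bar>H E k l\<bar>/2 * (u k l $ i)\<^sup>2)"
        by (simp only: real_sqrt_mult real_sqrt_abs)
      also have "\<dots> \<le> sqrt (\<mu> * (b1 $ i)\<^sup>2)" using key by (rule real_sqrt_le_mono)
      also have "\<dots> = sqrt \<mu> * \<bar>b1 $ i\<bar>" by (simp only: real_sqrt_mult real_sqrt_abs)
      also have "\<dots> = a $ i" using bpos[rule_format, of i] by (simp add: a_def)
      finally show ?thesis .
    qed
    have P3: "(\<Sum>k<p. \<Sum>l<p. outer a a + outer (v k l) (v k l)) \<in> cp_cone"
    proof (rule cp_sum)
      show "\<forall>k\<in>{..<p}. (\<Sum>l<p. outer a a + outer (v k l) (v k l)) \<in> cp_cone"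
      proof
        fix k assume k: "k \<in> {..<p}"
        show "(\<Sum>l<p. outer a a + outer (v k l) (v k l)) \<in> cp_cone"
        proof (rule cp_sum)
          show "\<forall>l\<in>{..<p}. outer a a + outer (v k l) (v k l) \<in> cp_cone"
          proof
            fix l assume l: "l \<in> {..<p}"
            show "outer a a + outer (v k l) (v k l) \<in> cp_cone"
            proof (rule cp_absorb)
              have kl: "k < p" "l < p" using k l by auto
              show "\<forall>i. \<bar>v k l $ i\<bar> \<le> a $ i" using absorb[OF kl] by blast
            qed
          qed
        qed simp
      qed
    qed simp
    show "A' \<in> cp_cone" unfolding eq by (rule cp_add[OF cp_add[OF P1 P2] P3])
  qed
  show ?thesis using \<delta>pos main by blast
qed


theorem lemma6p1:
  fixes A :: "real^'n^'n"
  assumes "A \<in> sym_mats"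
  shows "A \<in> (top_of_set sym_mats) interior_of cp_cone \<longleftrightarrow>
    (rank A = CARD('n) \<and>
     (\<exists>b1 :: real^'n. \<exists>lam::real. (\<forall>i. b1 $ i > 0) \<and> lam > 0 \<and>
        A - lam *\<^sub>R outer b1 b1 \<in> cp_cone))"
  unfolding interior_iff[OF assms]
proof
  assume "\<exists>e>0. \<forall>A'\<in>sym_mats. dist A' A < e \<longrightarrow> A' \<in> cp_cone"
  then obtain e where "e > 0" "\<forall>A'\<in>sym_mats. dist A' A < e \<longrightarrow> A' \<in> cp_cone" by blast
  then show "rank A = CARD('n) \<and>
     (\<exists>b1 :: real^'n. \<exists>lam::real. (\<forall>i. b1 $ i > 0) \<and> lam > 0 \<and>
        A - lam *\<^sub>R outer b1 b1 \<in> cp_cone)" by (rule forward[OF assms])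
next
  assume "rank A = CARD('n) \<and>
     (\<exists>b1 :: real^'n. \<exists>lam::real. (\<forall>i. b1 $ i > 0) \<and> lam > 0 \<and>
        A - lam *\<^sub>R outer b1 b1 \<in> cp_cone)"
  then obtain b1 :: "real^'n" and lam where "rank A = CARD('n)" "\<forall>i. b1 $ i > 0" "lam > 0"
    "A - lam *\<^sub>R outer b1 b1 \<in> cp_cone" by blast
  then show "\<exists>e>0. \<forall>A'\<in>sym_mats. dist A' A < e \<longrightarrow> A' \<in> cp_cone" by (rule backward)
qed

end
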